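(* Let $\mathcal{X}^{U}=\mathcal{X}^{+,U}\cup\mathcal{X}^{-,U}$ and let $\mathcal{V}$ be the Vervaat transform on $\mathcal{X}^U$. Then $\mathcal{V}:\mathcal{X}^U\to\mathcal{X}^U$ is a bijection with $\theta(\mathcal{V}(x))=\theta(x)$ and $H(\mathcal{V}(x))=-H(x)$; it maps $\mathcal{X}^{+,U}$ into $\mathcal{X}^{-,U}$ and $\mathcal{X}^{-,U}$ into $\mathcal{X}^{+,U}$; its level numbers satisfy $$N_{-h}(\mathcal{V}(x))=N_{H(x)-1-h}(x)\quad\text{for }h=0,\dots,H(x)-1,\text{ when }x\in\mathcal{X}^{+,U},$$ $$N_{-h}(\mathcal{V}(x))=N_{H(x)+1-h}(x)\quad\text{for }h=H(x)+1,\dots,0,\text{ when }x\in\mathcal{X}^{-,U};$$ and $\mathcal{V}$ is an involution: $\mathcal{V}\circ\mathcal{V}=\mathrm{Id}_{\mathcal{X}^U}$, so $\mathcal{V}^{-1}=\mathcal{V}$.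
   Context: A positive (resp. negative) excursion is a finite integer sequence $x=(x_n:0\le n\le\theta)$ with $x_0=x_\theta=0$, $x_n>0$ (resp. $x_n<0$) for $0<n<\theta$, and jumps $y_n=x_{n+1}-x_n\in\{1,-1\}$; $\theta=\theta(x)$ is its length. The height is $H(x)=\max_n x_n$ for positive and $H(x)=\min_n x_n$ for negative excursions. Level numbers: for positive $x$, $N_h(x)=|\{n\in[0,\theta):y_n=1,x_n=h\}|$ for $h\ge0$; for negative $x$, $N_h(x)=|\{n\in[0,\theta):y_n=-1,x_n=h\}|$ for $h\le0$. $\mathcal{X}^{+,U}$ is the set of positive excursions with $N_{H(x)-1}(x)=1$ and $\mathcal{X}^{-,U}$ the set of negative excursions with $N_{H(x)+1}(x)=1$; equivalently, excursions whose height is attained at a unique time $m\in(0,\theta)$. Vervaat transform: for $x\in\mathcal{X}^U$ with length $\theta$ and unique $m$ such that $x_m=H(x)$, $\mathcal{V}(x)=\hat x$ where $\hat x_n=x_{n+m}-H(x)$ for $0\le n\le\theta-m$ and $\hat x_n=x_{n+m-\theta}-H(x)$ for $\theta-m+1\le n\le\theta$. *)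

theory Defs
  imports Main
begin

text \<open>An integer sequence (x_n : 0 \<le> n \<le> \<theta>) is represented as a nonempty
  list of length \<theta>+1; x_n is x ! n.\<close>

definition theta :: "int list \<Rightarrow> nat" where
  "theta x = length x - 1"

definition unit_jumps :: "int list \<Rightarrow> bool" where
  "unit_jumps x \<longleftrightarrow> (\<forall>n < theta x. x ! (n+1) - x ! n \<in> {1, -1})"

definition pos_exc :: "int list \<Rightarrow> bool" where
  "pos_exc x \<longleftrightarrow> x \<noteq> [] \<and> x ! 0 = 0 \<and> x ! theta x = 0 \<and>
     (\<forall>n. 0 < n \<and> n < theta x \<longrightarrow> x ! n > 0) \<and> unit_jumps x"

definition neg_exc :: "int list \<Rightarrow> bool" where
  "neg_exc x \<longleftrightarrow> x \<noteq> [] \<and> x ! 0 = 0 \<and> x ! theta x = 0 \<and>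
     (\<forall>n. 0 < n \<and> n < theta x \<longrightarrow> x ! n < 0) \<and> unit_jumps x"

definition height :: "int list \<Rightarrow> int" where
  "height x = (if pos_exc x then Max (set x) else Min (set x))"

definition N :: "int \<Rightarrow> int list \<Rightarrow> nat" where
  "N h x = (if pos_exc x
      then card {n. n < theta x \<and> x ! (n+1) - x ! n = 1 \<and> x ! n = h}
      else card {n. n < theta x \<and> x ! (n+1) - x ! n = -1 \<and> x ! n = h})"

definition XpU :: "int list set" where
  "XpU = {x. pos_exc x \<and> N (height x - 1) x = 1}"

definition XmU :: "int list set" where
  "XmU = {x. neg_exc x \<and> N (height x + 1) x = 1}"

definition XU :: "int list set" where
  "XU = XpU \<union> XmU"

definition argH :: "int list \<Rightarrow> nat" where
  "argH x = (THE m. 0 < m \<and> m < theta x \<and> x ! m = height x)"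

definition vervaat :: "int list \<Rightarrow> int list" where
  "vervaat x = (let m = argH x; t = theta x; H = height x in
     map (\<lambda>n. if n \<le> t - m then x ! (n + m) - H else x ! (n + m - t) - H) [0..<t+1])"

end

theory Submission imports Defs begin

lemma mod2: "(k::nat) < 2*t \<Longrightarrow> k mod t = (if k < t then k else k - t)"
  by (simp add: le_mod_geq)

lemma card_Suc_filter: "card {j. j < Suc n \<and> P j} = card {j. j < n \<and> P j} + (if P n then 1 else 0)"
proof -
  have "{j. j < Suc n \<and> P j} = (if P n then insert n {j. j < n \<and> P j} else {j. j < n \<and> P j})"
    by (auto simp: less_Suc_eq)
  thus ?thesis by auto
qed

lemma cross_aux:
  fixes f :: "nat \<Rightarrow> int"
  assumes "\<forall>n<t. f (Suc n) - f n \<in> {1,-1}" "n \<le> t"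
  shows "int (card {j. j<n \<and> f (Suc j) - f j = 1 \<and> f j = k})
       - int (card {j. j<n \<and> f (Suc j) - f j = -1 \<and> f j = k+1})
       = (if f n > k then 1 else 0) - (if f 0 > k then 1 else 0)"
  using assms(2)
proof (induction n)
  case 0 then show ?case by simp
next
  case (Suc n)
  have "n < t" using Suc.prems by simp
  then have "f (Suc n) - f n \<in> {1,-1}" using assms(1) by blast
  then have "f (Suc n) = f n + 1 \<or> f (Suc n) = f n - 1" by auto
  then show ?case using Suc.IH Suc.prems
    by (elim disjE; simp add: card_Suc_filter split: if_splits)
qed

lemma cross:
  fixes f :: "nat \<Rightarrow> int"
  assumes "\<forall>n<t. f (Suc n) - f n \<in> {1,-1}" "f 0 = f t"
  shows "card {j. j<t \<and> f (Suc j) - f j = 1 \<and> f j = k}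
       = card {j. j<t \<and> f (Suc j) - f j = -1 \<and> f j = k+1}"
  using cross_aux[OF assms(1) order_refl, of k] assms(2) by simp

lemma rot_step:
  assumes "0 < t" "(x::int list) ! 0 = x ! t"
  shows "x ! ((Suc n + m) mod t) = x ! Suc ((n + m) mod t)"
proof -
  have "(Suc n + m) mod t = Suc (n+m) mod t" by simp
  then show ?thesis using assms by (auto simp: mod_Suc)
qed

lemma rot_inj: "0 < t \<Longrightarrow> inj_on (\<lambda>n. (n + m) mod t) {..<(t::nat)}"
proof (rule inj_onI)
  fix a b assume t: "0 < t" and a': "a \<in> {..<t}" and b': "b \<in> {..<t}"
    and e: "(a + m) mod t = (b + m) mod t"
  have "(a + m mod t) mod t = (b + m mod t) mod t" using e by (simp add: mod_add_right_eq)
  moreover have mt: "m mod t < t" using t by simp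
  have a: "a < t" and b: "b < t" using a' b' by auto
  moreover have "(a + m mod t) mod t = (if a + m mod t < t then a + m mod t else a + m mod t - t)"
    by (rule mod2) (use a mt in linarith)
  moreover have "(b + m mod t) mod t = (if b + m mod t < t then b + m mod t else b + m mod t - t)"
    by (rule mod2) (use b mt in linarith)
  ultimately show "a = b" using a b
    by (simp split: if_splits; linarith)
qed

lemma rot_card:
  assumes "0 < t" "(x::int list) ! 0 = x ! t"
    and v: "\<And>n. n \<le> t \<Longrightarrow> v ! n = x ! ((n + m) mod t) - c"
  shows "card {n. n < t \<and> P (v ! n) (v ! (n+1))} = card {j. j < t \<and> P (x ! j - c) (x ! (j+1) - c)}"
proof -
  let ?g = "\<lambda>n. (n + m) mod t"
  let ?Q = "\<lambda>j. P (x ! j - c) (x ! (j+1) - c)"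
  have img: "?g ` {..<t} = {..<t}"
  proof -
    have "?g ` {..<t} \<subseteq> {..<t}" using assms(1) by auto
    then show ?thesis using endo_inj_surj[OF finite_lessThan _ rot_inj[OF assms(1)]] by blast
  qed
  have "{n. n < t \<and> P (v ! n) (v ! (n+1))} = {n. n < t \<and> ?Q (?g n)}"
  proof (rule Collect_cong)
    fix n show "(n < t \<and> P (v ! n) (v ! (n+1))) = (n < t \<and> ?Q (?g n))"
    proof (cases "n < t")
      case True
      then have "v ! n = x ! ?g n - c" "v ! (n+1) = x ! (?g n + 1) - c"
        using v[of n] v[of "Suc n"] rot_step[OF assms(1,2), of n m] by auto
      then show ?thesis by simp
    qed simp
  qed
  moreover have "?g ` {n. n < t \<and> ?Q (?g n)} = {j. j < t \<and> ?Q j}"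
  proof
    show "?g ` {n. n < t \<and> ?Q (?g n)} \<subseteq> {j. j < t \<and> ?Q j}" using assms(1) by auto
    show "{j. j < t \<and> ?Q j} \<subseteq> ?g ` {n. n < t \<and> ?Q (?g n)}"
    proof
      fix j assume j: "j \<in> {j. j < t \<and> ?Q j}"
      then have "j \<in> ?g ` {..<t}" using img by simp
      then obtain n where "n < t" "j = ?g n" by auto
      then show "j \<in> ?g ` {n. n < t \<and> ?Q (?g n)}" using j by auto
    qed
  qed
  moreover have "card (?g ` {n. n < t \<and> ?Q (?g n)}) = card {n. n < t \<and> ?Q (?g n)}"
    by (rule card_image, rule inj_on_subset[OF rot_inj[OF assms(1), of m]]) auto
  ultimately show ?thesis by simp
qed


lemma vervaat_len: "length (vervaat x) = theta x + 1"
  by (simp add: vervaat_def Let_def)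

lemma vervaat_nth:
  assumes "0 < argH x" "argH x < theta x" "x ! 0 = x ! theta x" "n \<le> theta x"
  shows "vervaat x ! n = x ! ((n + argH x) mod theta x) - height x"
proof -
  define m where "m = argH x"
  define t where "t = theta x"
  have m: "0 < m" "m < t" and e: "x ! 0 = x ! t" and n: "n \<le> t" using assms by (auto simp: m_def t_def)
  have "vervaat x ! n = (if n \<le> t - m then x ! (n + m) - height x else x ! (n + m - t) - height x)"
    unfolding vervaat_def Let_def m_def[symmetric] t_def[symmetric] using n
    by (simp del: upt_Suc)
  also have "\<dots> = x ! ((n + m) mod t) - height x"
  proof -
    consider "n + m < t" | "n + m = t" | "t < n + m" by linarith
    then show ?thesis
    proof cases
      case 1 then have "n \<le> t - m" by linarith
      then show ?thesis using 1 by simp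
    next
      case 2 then show ?thesis using e by simp
    next
      case 3
      have "(n + m) mod t = n + m - t" using mod2[of "n+m" t] 3 m n by simp
      moreover have "\<not> n \<le> t - m" using 3 m by linarith
      ultimately show ?thesis by simp
    qed
  qed
  finally show ?thesis by (simp add: m_def t_def)
qed

lemma len_theta: "x \<noteq> [] \<Longrightarrow> length x = Suc (theta x)"
  by (simp add: theta_def)

lemma pos_props:
  assumes "x \<in> XpU"
  shows "pos_exc x" "x \<noteq> []" "length x = Suc (theta x)" "x ! 0 = 0" "x ! theta x = 0"
    "\<And>n. 0 < n \<Longrightarrow> n < theta x \<Longrightarrow> x ! n > 0"
    "\<And>n. n < theta x \<Longrightarrow> x ! Suc n - x ! n \<in> {1,-1}"
    "2 \<le> theta x" "height x = Max (set x)"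
    "\<And>j. j \<le> theta x \<Longrightarrow> 0 \<le> x ! j \<and> x ! j \<le> height x"
    "0 < argH x" "argH x < theta x" "x ! argH x = height x"
    "\<And>j. j \<le> theta x \<Longrightarrow> x ! j = height x \<Longrightarrow> j = argH x"
    "x ! 1 = 1"
proof -
  define t where "t = theta x"
  have pe: "pos_exc x" and NH: "N (height x - 1) x = 1" using assms by (auto simp: XpU_def)
  show "pos_exc x" by (rule pe)
  show ne: "x \<noteq> []" using pe by (simp add: pos_exc_def)
  then show len: "length x = Suc (theta x)" by (rule len_theta)
  show x0: "x ! 0 = 0" and xt: "x ! theta x = 0" using pe by (auto simp: pos_exc_def)
  show pos: "\<And>n. 0 < n \<Longrightarrow> n < theta x \<Longrightarrow> x ! n > 0" using pe by (auto simp: pos_exc_def)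
  show jm: "\<And>n. n < theta x \<Longrightarrow> x ! Suc n - x ! n \<in> {1,-1}"
    using pe by (auto simp: pos_exc_def unit_jumps_def)
  show H: "height x = Max (set x)" using pe by (simp add: height_def)
  define S where "S = {n. n < theta x \<and> x ! (n+1) - x ! n = 1 \<and> x ! n = height x - 1}"
  have cS: "card S = 1" using NH pe by (simp add: N_def S_def)
  then obtain s where Ss: "S = {s}" by (rule card_1_singletonE)
  have "s \<in> S" using Ss by simp
  then have "s < theta x" by (simp add: S_def)
  then have t1: "1 \<le> theta x" by simp
  show t2: "2 \<le> theta x"
  proof (rule ccontr)
    assume "\<not> 2 \<le> theta x"
    then have "theta x = 1" using t1 by simp
    then show False using jm[of 0] x0 xt by simp
  qed
  show bnd: "\<And>j. j \<le> theta x \<Longrightarrow> 0 \<le> x ! j \<and> x ! j \<le> height x"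
  proof -
    fix j assume j: "j \<le> theta x"
    have "x ! j \<in> set x" using j len by simp
    then have "x ! j \<le> height x" using H by simp
    moreover have "0 \<le> x ! j" using pos[of j] x0 xt j by (cases "j = 0 \<or> j = theta x") (auto simp: le_less)
    ultimately show "0 \<le> x ! j \<and> x ! j \<le> height x" by simp
  qed
  have x1: "x ! 1 > 0" using pos[of 1] t2 by simp
  then show "x ! 1 = 1" using jm[of 0] t2 x0 by auto
  have Hpos: "height x > 0" using bnd[of 1] x1 t2 by simp
  have uniq: "j = Suc s" if j: "j \<le> theta x" "x ! j = height x" for j
  proof -
    have j0: "j \<noteq> 0" using j x0 Hpos by (cases j) auto
    have jt: "j \<noteq> theta x" using j xt Hpos by auto
    obtain i where i: "j = Suc i" "i < theta x" using j j0 jt by (cases j) auto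
    have "x ! i \<le> height x" using bnd[of i] i by simp
    then have "x ! i = height x - 1" using jm[of i] i j by auto
    then have "i \<in> S" using i j by (simp add: S_def)
    then show ?thesis using Ss i by simp
  qed
  have "height x \<in> set x" using H ne by simp
  then obtain j where j: "j < length x" "x ! j = height x" by (auto simp: in_set_conv_nth)
  have js: "j = Suc s" using uniq[of j] j len by simp
  have P: "0 < Suc s \<and> Suc s < theta x \<and> x ! Suc s = height x"
    using j js len x0 xt Hpos by (auto simp: less_Suc_eq)
  have A: "argH x = Suc s" unfolding argH_def
  proof (rule the_equality)
    show "0 < Suc s \<and> Suc s < theta x \<and> x ! Suc s = height x" by (rule P)
    fix m assume "0 < m \<and> m < theta x \<and> x ! m = height x"
    then show "m = Suc s" using uniq by simp
  qed
  show "0 < argH x" "argH x < theta x" "x ! argH x = height x" using P A by auto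
  show "\<And>j. j \<le> theta x \<Longrightarrow> x ! j = height x \<Longrightarrow> j = argH x" using uniq A by simp
qed


lemma pos_main:
  assumes x: "x \<in> XpU"
  shows "vervaat x \<in> XmU" "theta (vervaat x) = theta x" "height (vervaat x) = - height x"
   "\<And>h. N (-h) (vervaat x) = N (height x - 1 - h) x" "vervaat (vervaat x) = x"
   "argH (vervaat x) < theta (vervaat x)" "2 \<le> theta (vervaat x)" "neg_exc (vervaat x)"
proof -
  note P = pos_props[OF x]
  define t where "t = theta x"
  define m where "m = argH x"
  define H where "H = height x"
  define V where "V = vervaat x"
  have t2: "2 \<le> t" and m: "0 < m" "m < t" and xm: "x ! m = H"
    and un: "\<And>j. j \<le> t \<Longrightarrow> x ! j = H \<Longrightarrow> j = m"
    and bnd: "\<And>j. j \<le> t \<Longrightarrow> 0 \<le> x ! j \<and> x ! j \<le> H"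
    and x0: "x ! 0 = 0" and xt: "x ! t = 0" and x1: "x ! 1 = 1"
    and pos: "\<And>n. 0 < n \<Longrightarrow> n < t \<Longrightarrow> x ! n > 0"
    and jm: "\<And>n. n < t \<Longrightarrow> x ! Suc n - x ! n \<in> {1,-1}"
    and len: "length x = Suc t" and pe: "pos_exc x"
    using P by (auto simp: t_def m_def H_def)
  have t0: "0 < t" using t2 by simp
  have e: "x ! 0 = x ! t" using x0 xt by simp
  have Vn: "\<And>n. n \<le> t \<Longrightarrow> V ! n = x ! ((n + m) mod t) - H"
    using vervaat_nth[of x] P(11,12) e by (simp add: t_def m_def H_def V_def)
  have lenV: "length V = Suc t" using vervaat_len[of x] by (simp add: V_def t_def)
  then have thV: "theta V = t" by (simp add: theta_def)
  have V0: "V ! 0 = 0" using Vn[of 0] m xm by simp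
  have Vt: "V ! t = 0" using Vn[of t] m xm by simp
  have Vneg: "V ! n < 0" if n: "0 < n" "n < t" for n
  proof -
    define j where "j = (n + m) mod t"
    have jt: "j < t" using t0 by (simp add: j_def)
    have "j \<noteq> m"
    proof
      assume "j = m"
      then have "(n + m) mod t = (0 + m) mod t" using m by (simp add: j_def)
      then have "n = 0" using inj_onD[OF rot_inj[OF t0, of m], of n 0] n t0 by simp
      then show False using n by simp
    qed
    then have "x ! j \<noteq> H" using un[of j] jt by auto
    moreover have "x ! j \<le> H" using bnd[of j] jt by simp
    ultimately have "x ! j < H" by simp
    then show ?thesis using Vn[of n] n by (simp add: j_def)
  qed
  have Vjm: "V ! Suc n - V ! n \<in> {1,-1}" if n: "n < t" for n
  proof -
    define j where "j = (n + m) mod t"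
    have jt: "j < t" using t0 by (simp add: j_def)
    have "V ! Suc n = x ! Suc j - H" using Vn[of "Suc n"] n rot_step[OF t0 e, of n m] by (simp add: j_def)
    moreover have "V ! n = x ! j - H" using Vn[of n] n by (simp add: j_def)
    ultimately show ?thesis using jm[OF jt] by simp
  qed
  have ne: "neg_exc V" unfolding neg_exc_def unit_jumps_def thV
    using lenV V0 Vt Vneg Vjm by auto
  have npos: "\<not> pos_exc V" using Vneg[of 1] t2 by (auto simp: pos_exc_def thV)
  have VtmH: "V ! (t - m) = - H" using Vn[of "t-m"] m x0 by simp
  have Vge: "- H \<le> V ! n" if "n \<le> t" for n
  proof -
    have "(n + m) mod t \<le> t" using t0 by (simp add: order.strict_implies_order)
    then show ?thesis using Vn[OF that] bnd[of "(n + m) mod t"] by simp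
  qed
  have hV: "height V = - H" unfolding height_def using npos
  proof (simp, intro Min_eqI)
    show "finite (set V)" by simp
    show "\<And>y. y \<in> set V \<Longrightarrow> - H \<le> y" using Vge lenV by (auto simp: in_set_conv_nth)
    show "- H \<in> set V" using VtmH lenV m by (metis Suc_diff_Suc diff_less_Suc less_trans_Suc nth_mem t0)
  qed
  have NV: "N (-h) V = N (H - 1 - h) x" for h
  proof -
    have "N (-h) V = card {n. n < t \<and> V ! (n+1) - V ! n = -1 \<and> V ! n = -h}"
      using npos by (simp add: N_def thV)
    also have "\<dots> = card {j. j < t \<and> (x ! (j+1) - H) - (x ! j - H) = -1 \<and> x ! j - H = -h}"
      by (rule rot_card[OF t0 e Vn, where P = "\<lambda>a b. b - a = -1 \<and> a = -h"])
    also have "\<dots> = card {j. j < t \<and> x ! Suc j - x ! j = -1 \<and> x ! j = (H - 1 - h) + 1}"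
      by (rule arg_cong[where f = card]) auto
    also have "\<dots> = card {j. j < t \<and> x ! Suc j - x ! j = 1 \<and> x ! j = H - 1 - h}"
      by (rule cross[where f = "(!) x", symmetric]) (use jm e in auto)
    also have "\<dots> = N (H - 1 - h) x" using pe by (simp add: N_def t_def)
    finally show ?thesis .
  qed
  have N0: "N 0 x = 1"
  proof -
    have "{j. j < t \<and> x ! (j+1) - x ! j = 1 \<and> x ! j = 0} = {0}"
      using x0 x1 t0 pos by force
    then show ?thesis using pe by (simp add: N_def t_def)
  qed
  have VX: "V \<in> XmU"
    using ne NV[of "H - 1"] N0 hV by (simp add: XmU_def)
  have aV: "argH V = t - m" unfolding argH_def
  proof (rule the_equality)
    show "0 < t - m \<and> t - m < theta V \<and> V ! (t - m) = height V" using m VtmH hV thV by simp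
    fix k assume k': "0 < k \<and> k < theta V \<and> V ! k = height V"
    then have k: "0 < k \<and> k < t \<and> V ! k = height V" using thV by simp
    define j where "j = (k + m) mod t"
    have "x ! j = 0" using Vn[of k] k hV by (simp add: j_def)
    moreover have "j < t" using t0 by (simp add: j_def)
    ultimately have "j = 0" using pos[of j] by force
    moreover have "j = (if k + m < t then k + m else k + m - t)" unfolding j_def
      by (rule mod2) (use k m in linarith)
    ultimately show "k = t - m" using k m by (auto split: if_splits)
  qed
  have VV: "vervaat V = x"
  proof (rule nth_equalityI)
    show "length (vervaat V) = length x" using vervaat_len[of V] thV len by simp
    fix n assume "n < length (vervaat V)"
    then have n: "n \<le> t" using vervaat_len[of V] thV by simp
    have "vervaat V ! n = V ! ((n + (t - m)) mod t) - height V"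
      using vervaat_nth[of V n] aV thV m V0 Vt n by simp
    also have "\<dots> = x ! (((n + (t - m)) mod t + m) mod t)"
      using Vn[of "(n + (t - m)) mod t"] t0 hV by (simp add: order.strict_implies_order)
    also have "((n + (t - m)) mod t + m) mod t = n mod t"
      using m by (simp add: mod_add_left_eq)
    also have "x ! (n mod t) = x ! n"
      using n e by (cases "n = t") auto
    finally show "vervaat V ! n = x ! n" .
  qed
  show "vervaat x \<in> XmU" "theta (vervaat x) = theta x" "height (vervaat x) = - height x"
   "\<And>h. N (-h) (vervaat x) = N (height x - 1 - h) x" "vervaat (vervaat x) = x"
   "argH (vervaat x) < theta (vervaat x)" "2 \<le> theta (vervaat x)" "neg_exc (vervaat x)"
    using VX thV hV NV VV aV m t2 ne by (simp_all add: V_def t_def H_def)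
qed


definition negl :: "int list \<Rightarrow> int list" where "negl x = map uminus x"

lemma negl_negl[simp]: "negl (negl x) = x" by (simp add: negl_def)
lemma theta_negl[simp]: "theta (negl x) = theta x" by (simp add: negl_def theta_def)
lemma negl_Nil[simp]: "negl x = [] \<longleftrightarrow> x = []" by (simp add: negl_def)
lemma length_negl[simp]: "length (negl x) = length x" by (simp add: negl_def)
lemma negl_nth: "x \<noteq> [] \<Longrightarrow> n \<le> theta x \<Longrightarrow> negl x ! n = - (x ! n)"
  unfolding negl_def by (rule nth_map) (cases x, auto simp: theta_def)

lemma unit_jumps_negl: "x \<noteq> [] \<Longrightarrow> unit_jumps (negl x) = unit_jumps x"
  unfolding unit_jumps_def by (auto simp: negl_nth)

lemma pos_negl: "pos_exc (negl x) = neg_exc x"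
  by (cases "x = []") (auto simp: pos_exc_def neg_exc_def negl_nth unit_jumps_negl)

lemma neg_negl: "neg_exc (negl x) = pos_exc x"
  using pos_negl[of "negl x"] by simp

lemma neg_not_pos: "neg_exc x \<Longrightarrow> 2 \<le> theta x \<Longrightarrow> \<not> pos_exc x"
  unfolding neg_exc_def pos_exc_def by (metis less_le_trans one_less_numeral_iff semiring_norm(76) zero_less_one less_asym)

lemma height_negl:
  assumes "neg_exc x" "2 \<le> theta x"
  shows "height (negl x) = - height x"
proof -
  have ne: "x \<noteq> []" using assms by (simp add: neg_exc_def)
  have "pos_exc (negl x)" using assms by (simp add: pos_negl)
  then have h1: "height (negl x) = Max (set (negl x))" by (simp add: height_def)
  have "set (negl x) = uminus ` set x" by (simp add: negl_def)
  then have "height (negl x) = Max (uminus ` set x)" using h1 by simp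
  also have "\<dots> = - Min (set x)"
  proof (rule Max_eqI)
    show "finite (uminus ` set x)" by simp
    show "\<And>y. y \<in> uminus ` set x \<Longrightarrow> y \<le> - Min (set x)" by auto
    show "- Min (set x) \<in> uminus ` set x" using ne by simp
  qed
  also have "\<dots> = - height x" using neg_not_pos[OF assms] by (simp add: height_def)
  finally show ?thesis .
qed

lemma N_negl:
  assumes "neg_exc x" "2 \<le> theta x"
  shows "N h (negl x) = N (-h) x"
proof -
  have ne: "x \<noteq> []" using assms by (simp add: neg_exc_def)
  have "{n. n < theta x \<and> negl x ! (n+1) - negl x ! n = 1 \<and> negl x ! n = h}
      = {n. n < theta x \<and> x ! (n+1) - x ! n = -1 \<and> x ! n = -h}"
    using ne by (auto simp: negl_nth)
  then show ?thesis using assms neg_not_pos[OF assms] by (simp add: N_def pos_negl)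
qed

lemma argH_negl:
  assumes "neg_exc x" "2 \<le> theta x"
  shows "argH (negl x) = argH x"
proof -
  have ne: "x \<noteq> []" using assms by (simp add: neg_exc_def)
  show ?thesis unfolding argH_def height_negl[OF assms] theta_negl
    by (rule arg_cong[where f = The], rule ext) (auto simp: negl_nth ne)
qed

lemma vervaat_negl:
  assumes "neg_exc x" "2 \<le> theta x" "argH x < theta x"
  shows "vervaat (negl x) = negl (vervaat x)"
proof (rule nth_equalityI)
  have ne: "x \<noteq> []" using assms by (simp add: neg_exc_def)
  show "length (vervaat (negl x)) = length (negl (vervaat x))"
    by (simp add: vervaat_len)
  fix n assume "n < length (vervaat (negl x))"
  then have n: "n \<le> theta x" by (simp add: vervaat_len)
  have vn: "vervaat (negl x) ! n = - (vervaat x ! n)"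
    unfolding vervaat_def Let_def argH_negl[OF assms(1,2)] height_negl[OF assms(1,2)] theta_negl
    using n assms(3) ne by (simp add: negl_nth del: upt_Suc)
  have "negl (vervaat x) ! n = - (vervaat x ! n)"
    using n by (simp add: negl_def vervaat_len del: negl_negl)
  then show "vervaat (negl x) ! n = negl (vervaat x) ! n" using vn by simp
qed

lemma XmU_theta: "x \<in> XmU \<Longrightarrow> 2 \<le> theta x"
proof (rule ccontr)
  assume x: "x \<in> XmU" and "\<not> 2 \<le> theta x"
  then consider "theta x = 0" | "theta x = 1" by linarith
  then show False
  proof cases
    case 1
    then have "N h x = 0" for h by (simp add: N_def)
    then show False using x by (simp add: XmU_def)
  next
    case 2 then show False using x by (auto simp: XmU_def neg_exc_def unit_jumps_def)
  qed
qed

lemma XmU_negl: "x \<in> XmU \<Longrightarrow> negl x \<in> XpU"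
  using XmU_theta[of x] by (simp add: XmU_def XpU_def pos_negl height_negl N_negl ac_simps)

lemma neg_main:
  assumes x: "x \<in> XmU"
  shows "vervaat x \<in> XpU" "theta (vervaat x) = theta x" "height (vervaat x) = - height x"
   "\<And>h. N (-h) (vervaat x) = N (height x + 1 - h) x" "vervaat (vervaat x) = x"
proof -
  have nx: "neg_exc x" and t2: "2 \<le> theta x" using x XmU_theta by (auto simp: XmU_def)
  define y where "y = negl x"
  have y: "y \<in> XpU" using XmU_negl[OF x] by (simp add: y_def)
  note PM = pos_main[OF y]
  have aH: "argH x < theta x" using pos_props(12)[OF y] argH_negl[OF nx t2] by (simp add: y_def)
  have Vx: "vervaat x = negl (vervaat y)"
    using vervaat_negl[OF nx t2 aH] by (simp add: y_def)
  have hy: "height y = - height x" using height_negl[OF nx t2] by (simp add: y_def)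
  show "vervaat x \<in> XpU" using XmU_negl[OF PM(1)] Vx by simp
  show "theta (vervaat x) = theta x" using Vx PM(2) by (simp add: y_def)
  show "height (vervaat x) = - height x" using Vx height_negl[OF PM(8) PM(7)] PM(3) hy by simp
  show "N (-h) (vervaat x) = N (height x + 1 - h) x" for h
  proof -
    have "N (-h) (vervaat x) = N h (vervaat y)" using Vx N_negl[OF PM(8) PM(7)] by simp
    also have "\<dots> = N (height y - 1 + h) y" using PM(4)[of "-h"] by simp
    also have "\<dots> = N (height x + 1 - h) x" using N_negl[OF nx t2, of "height y - 1 + h"] hy
      by (simp add: y_def ac_simps)
    finally show ?thesis .
  qed
  show "vervaat (vervaat x) = x"
    using Vx vervaat_negl[OF PM(8) PM(7) PM(6)] PM(5) by (simp add: y_def)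
qed

theorem proposition4:
  shows "bij_betw vervaat XU XU
    \<and> (\<forall>x\<in>XU. theta (vervaat x) = theta x \<and> height (vervaat x) = - height x)
    \<and> vervaat ` XpU \<subseteq> XmU \<and> vervaat ` XmU \<subseteq> XpU
    \<and> (\<forall>x\<in>XpU. \<forall>h. 0 \<le> h \<and> h \<le> height x - 1 \<longrightarrow>
          N (-h) (vervaat x) = N (height x - 1 - h) x)
    \<and> (\<forall>x\<in>XmU. \<forall>h. height x + 1 \<le> h \<and> h \<le> 0 \<longrightarrow>
          N (-h) (vervaat x) = N (height x + 1 - h) x)
    \<and> (\<forall>x\<in>XU. vervaat (vervaat x) = x)
    \<and> (\<forall>x\<in>XU. inv_into XU vervaat x = vervaat x)"
proof -
  have inv: "\<forall>x\<in>XU. vervaat (vervaat x) = x"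
    using pos_main(5) neg_main(5) by (auto simp: XU_def)
  have img: "vervaat ` XU \<subseteq> XU"
    using pos_main(1) neg_main(1) by (auto simp: XU_def)
  have bij: "bij_betw vervaat XU XU"
    by (rule bij_betw_byWitness[OF inv inv img img])
  have inj: "inj_on vervaat XU" using bij by (rule bij_betw_imp_inj_on)
  have invi: "\<forall>x\<in>XU. inv_into XU vervaat x = vervaat x"
  proof
    fix x assume x: "x \<in> XU"
    show "inv_into XU vervaat x = vervaat x"
      by (rule inv_into_f_eq[OF inj]) (use x img inv in auto)
  qed
  show ?thesis
    using bij inv invi
      pos_main(1,2,3,4) neg_main(1,2,3,4)
    by (auto simp: XU_def)
qed

end
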